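(* In the setting described in the context, let $q\in\{1,\dots,n\}$ and assume there exists $A'\subseteq\mathcal C$ with $|A'|=n-q$ and $f(A')=0$. Define $\mu_\wedge:2^{\mathcal C}\to L$ by $\mu_\wedge(\mathcal C)=1$, $\mu_\wedge(X)=f(X)$ if $n-q\le|X|<n$, and $\mu_\wedge(X)=\min_{Y\supsetneq X,\ n-q\le|Y|<n}f(Y)$ if $|X|<n-q$. Then $\mu_\wedge$ is a $q$-minitive capacity on $\mathcal C$.
   Context: Let $\mathcal C=\{1,\dots,n\}$ and let $L$ be either a finite totally ordered set $0=\xi_1<\dots<\xi_l=1$ or $L=[0,1]$. Training data: $N$ pairs $(x^{(k)},\alpha^{(k)})$ with $x^{(k)}\in L^n$, $\alpha^{(k)}\in L$. For $B\subsetneq\mathcal C$, $\gamma_{k,B}=\max_{i\in\mathcal C\setminus B}x^{(k)}_i$ and $f(B)=\max_{1\le k\le N}(\gamma_{k,B}\,\epsilon\,\alpha^{(k)})$ where $a\,\epsilon\,b=b$ if $a<b$ and $a\,\epsilon\,b=0$ if $a\ge b$. A capacity is a map $\mu:2^{\mathcal C}\to L$ with $\mu(\emptyset)=0$, $\mu(\mathcal C)=1$, monotone for inclusion; it is $q$-minitive if for all $X$ with $|X|<n-q$, $\mu(X)=\min_{Y\supsetneq X,\ |Y|\ge n-q}\mu(Y)$. *)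

theory Defs
  imports Complex_Main
begin

text \<open>Criteria set C = {1..n}; values in L, a subset of the reals
  (either the interval [0,1] or a finite chain 0 = xi_1 < ... < xi_l = 1).
  Training data: x k i (for 1 <= k <= N, i in C) and alpha k.\<close>

definition eps_op :: "real \<Rightarrow> real \<Rightarrow> real" where
  "eps_op a b = (if a < b then b else 0)"

definition gamma_kB :: "nat \<Rightarrow> (nat \<Rightarrow> nat \<Rightarrow> real) \<Rightarrow> nat \<Rightarrow> nat set \<Rightarrow> real" where
  "gamma_kB n x k B = Max ((x k) ` ({1..n} - B))"

definition f_data :: "nat \<Rightarrow> nat \<Rightarrow> (nat \<Rightarrow> nat \<Rightarrow> real) \<Rightarrow> (nat \<Rightarrow> real) \<Rightarrow> nat set \<Rightarrow> real" where
  "f_data n N x alpha B = Max ((\<lambda>k. eps_op (gamma_kB n x k B) (alpha k)) ` {1..N})"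

definition is_capacity :: "nat \<Rightarrow> real set \<Rightarrow> (nat set \<Rightarrow> real) \<Rightarrow> bool" where
  "is_capacity n L \<mu> \<longleftrightarrow>
     (\<forall>X. X \<subseteq> {1..n} \<longrightarrow> \<mu> X \<in> L) \<and> \<mu> {} = 0 \<and> \<mu> {1..n} = 1 \<and>
     (\<forall>X Y. X \<subseteq> Y \<and> Y \<subseteq> {1..n} \<longrightarrow> \<mu> X \<le> \<mu> Y)"

definition q_minitive :: "nat \<Rightarrow> nat \<Rightarrow> (nat set \<Rightarrow> real) \<Rightarrow> bool" where
  "q_minitive n q \<mu> \<longleftrightarrow>
     (\<forall>X. X \<subseteq> {1..n} \<and> card X < n - q \<longrightarrow>
        \<mu> X = Min {\<mu> Y | Y. X \<subset> Y \<and> Y \<subseteq> {1..n} \<and> n - q \<le> card Y})"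

definition mu_wedge :: "nat \<Rightarrow> nat \<Rightarrow> (nat set \<Rightarrow> real) \<Rightarrow> nat set \<Rightarrow> real" where
  "mu_wedge n q f X =
     (if X = {1..n} then 1
      else if n - q \<le> card X then f X
      else Min {f Y | Y. X \<subset> Y \<and> Y \<subseteq> {1..n} \<and> n - q \<le> card Y \<and> card Y < n})"

end

theory Submission
  imports Defs
begin

lemma extend_set:
  assumes "finite C" "X \<subseteq> C" "card X \<le> m" "m \<le> card C"
  shows "\<exists>Y. X \<subseteq> Y \<and> Y \<subseteq> C \<and> card Y = m"
proof -
  have fX: "finite X" using assms finite_subset by blast
  have "card (C - X) = card C - card X" using assms fX card_Diff_subset by blast
  then have "m - card X \<le> card (C - X)" using assms by simp
  then obtain Z where Z: "Z \<subseteq> C - X" "card Z = m - card X"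
    using obtain_subset_with_card_n by metis
  have fZ: "finite Z" using Z assms finite_subset by (metis finite_Diff)
  have "card (X \<union> Z) = card X + card Z" using Z fX fZ by (subst card_Un_disjoint) auto
  then show ?thesis using Z assms by (intro exI[of _ "X \<union> Z"]) auto
qed

lemma f_in_L:
  assumes N: "N \<ge> 1" and al: "\<And>k. k \<in> {1..N} \<Longrightarrow> alpha k \<in> L" and L0: "0 \<in> L"
  shows "f_data n N x alpha B \<in> L"
proof -
  have "f_data n N x alpha B \<in> (\<lambda>k. eps_op (gamma_kB n x k B) (alpha k)) ` {1..N}"
    unfolding f_data_def using N by (intro Max_in) auto
  then show ?thesis using al L0 by (auto simp: eps_op_def)
qed

lemma f_mono:
  assumes N: "N \<ge> 1" and al: "\<And>k. k \<in> {1..N} \<Longrightarrow> alpha k \<ge> 0"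
    and B: "B \<subseteq> B'" "B' \<subseteq> {1..n}" "B' \<noteq> {1..n}"
  shows "f_data n N x alpha B \<le> f_data n N x alpha B'"
proof -
  have ne: "{1..n} - B' \<noteq> {}" using B by auto
  have g: "gamma_kB n x k B' \<le> gamma_kB n x k B" for k
    unfolding gamma_kB_def using ne B by (intro Max_mono) auto
  have "eps_op (gamma_kB n x k B) (alpha k) \<le> f_data n N x alpha B'" if k: "k \<in> {1..N}" for k
  proof -
    have "eps_op (gamma_kB n x k B) (alpha k) \<le> eps_op (gamma_kB n x k B') (alpha k)"
      using g[of k] al[OF k] by (auto simp: eps_op_def)
    also have "\<dots> \<le> f_data n N x alpha B'" unfolding f_data_def using k by (intro Max_ge) auto
    finally show ?thesis .
  qed
  then show ?thesis unfolding f_data_def[of _ _ _ _ B] using N by (subst Max_le_iff) auto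
qed

lemma fin_img:
  "finite {F Y | Y::nat set. X \<subset> Y \<and> Y \<subseteq> {1..n} \<and> P Y}"
proof -
  have "{F Y | Y::nat set. X \<subset> Y \<and> Y \<subseteq> {1..n} \<and> P Y} \<subseteq> F ` Pow {1..n}" by auto
  then show ?thesis by (rule finite_subset) auto
qed

theorem proposition2:
  fixes n N q :: nat and L :: "real set"
    and x :: "nat \<Rightarrow> nat \<Rightarrow> real" and alpha :: "nat \<Rightarrow> real"
  assumes L: "L = {0..1} \<or> (finite L \<and> 0 \<in> L \<and> 1 \<in> L \<and> L \<subseteq> {0..1})"
    and N: "N \<ge> 1"
    and data_x: "\<And>k i. k \<in> {1..N} \<Longrightarrow> i \<in> {1..n} \<Longrightarrow> x k i \<in> L"
    and data_alpha: "\<And>k. k \<in> {1..N} \<Longrightarrow> alpha k \<in> L"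
    and q: "q \<in> {1..n}"
    and A': "\<exists>A'. A' \<subseteq> {1..n} \<and> card A' = n - q \<and> f_data n N x alpha A' = 0"
  shows "is_capacity n L (mu_wedge n q (f_data n N x alpha)) \<and>
         q_minitive n q (mu_wedge n q (f_data n N x alpha))"
proof -
  define F where "F = f_data n N x alpha"
  define C where "C = {1..(n::nat)}"
  define S where "S X = {F Y | Y. X \<subset> Y \<and> Y \<subseteq> C \<and> n - q \<le> card Y \<and> card Y < n}" for X
  define mu where "mu = mu_wedge n q F"
  have L0: "0 \<in> L" and L1: "1 \<in> L" and L01: "L \<subseteq> {0..1}" using L by auto
  have cC: "card C = n" and fC: "finite C" unfolding C_def by auto
  have q1: "1 \<le> q" "q \<le> n" using q by auto
  have FL: "F B \<in> L" for B unfolding F_def using f_in_L[of N alpha L] N data_alpha L0 by blast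
  have F01: "0 \<le> F B" "F B \<le> 1" for B using FL[of B] L01 by auto
  have alpha0: "alpha k \<ge> 0" if "k \<in> {1..N}" for k using data_alpha[OF that] L01 by auto
  have Fmono: "F B \<le> F B'" if "B \<subseteq> B'" "B' \<subseteq> C" "B' \<noteq> C" for B B'
    unfolding F_def using f_mono[of N alpha] N alpha0 that unfolding C_def by blast
  have finS: "finite (S X)" for X unfolding S_def C_def by (rule fin_img)
  have neS: "S X \<noteq> {}" if XX: "X \<subseteq> C" "card X < n - q" for X
  proof -
    obtain Y where Y: "X \<subseteq> Y" "Y \<subseteq> C" "card Y = n - q"
      using extend_set[OF fC XX(1), of "n - q"] XX cC by auto
    have "X \<noteq> Y" using Y XX by auto
    then have "F Y \<in> S X" unfolding S_def using Y q1 by auto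
    then show ?thesis by auto
  qed
  have mu_def2: "mu X = (if X = C then 1 else if n - q \<le> card X then F X else Min (S X))" for X
    unfolding mu_def mu_wedge_def S_def C_def by simp
  have muL: "mu X \<in> L" if "X \<subseteq> C" for X
  proof -
    have "Min (S X) \<in> L" if "card X < n - q"
    proof -
      have "Min (S X) \<in> S X" using Min_in[OF finS neS[OF \<open>X \<subseteq> C\<close> that]] .
      then show ?thesis using FL unfolding S_def by auto
    qed
    then show ?thesis using L1 FL by (auto simp: mu_def2)
  qed
  have mu01: "mu X \<le> 1" if "X \<subseteq> C" for X using muL[OF that] L01 by auto
  have mu_empty: "mu {} = 0"
  proof -
    obtain A where A: "A \<subseteq> C" "card A = n - q" "F A = 0" using A' unfolding F_def C_def by auto
    have ne: "{} \<noteq> C" using q1 unfolding C_def by auto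
    show ?thesis
    proof (cases "q = n")
      case True
      then have "A = {}" using A fC finite_subset by (metis card_0_eq diff_self_eq_0)
      then show ?thesis using A ne True by (simp add: mu_def2)
    next
      case False
      then have "n - q > 0" using q1 by auto
      then have "A \<noteq> {}" using A by auto
      moreover have "card A < n" using A q1 by auto
      ultimately have "F A \<in> S {}" unfolding S_def using A by auto
      then have "Min (S {}) \<le> 0" using Min_le[OF finS] A by metis
      moreover have "Min (S {}) \<ge> 0" using Min_in[OF finS neS[of "{}"]] \<open>n - q > 0\<close> F01
        unfolding S_def by auto
      ultimately show ?thesis using ne \<open>n - q > 0\<close> by (simp add: mu_def2)
    qed
  qed
  have mono: "mu X \<le> mu Y" if XY: "X \<subseteq> Y" "Y \<subseteq> C" for X Y
  proof (cases "Y = C")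
    case True
    then show ?thesis using mu01 XY by (simp add: mu_def2)
  next
    case YC: False
    then have XC: "X \<noteq> C" using XY by auto
    have cY: "card Y < n" using YC XY cC fC psubset_card_mono by (metis psubsetI)
    show ?thesis
    proof (cases "n - q \<le> card X")
      case True
      have "card X \<le> card Y" using XY fC finite_subset card_mono by metis
      then show ?thesis using True XC YC Fmono[OF XY YC] by (simp add: mu_def2)
    next
      case cX: False
      show ?thesis
      proof (cases "n - q \<le> card Y")
        case True
        then have "X \<noteq> Y" using cX by auto
        then have "F Y \<in> S X" unfolding S_def using XY True cY by auto
        then show ?thesis using Min_le[OF finS] cX XC YC True by (simp add: mu_def2)
      next
        case False
        have "S Y \<subseteq> S X" unfolding S_def using XY(1) subset_psubset_trans by blast
        moreover have "S Y \<noteq> {}" using neS[OF XY(2)] False by linarith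
        ultimately have "Min (S X) \<le> Min (S Y)" using finS by (intro Min_antimono)
        then show ?thesis using cX XC YC False by (simp add: mu_def2)
      qed
    qed
  qed
  have cap: "is_capacity n L mu"
  proof -
    have "mu C = 1" by (simp add: mu_def2)
    then show ?thesis
      unfolding is_capacity_def C_def[symmetric] using muL mu_empty mono by blast
  qed
  have qm: "q_minitive n q mu"
    unfolding q_minitive_def C_def[symmetric]
  proof (intro allI impI, elim conjE)
    fix X assume X: "X \<subseteq> C" "card X < n - q"
    have XC: "X \<noteq> C" using X cC by auto
    have eq: "{mu Y | Y. X \<subset> Y \<and> Y \<subseteq> C \<and> n - q \<le> card Y} = insert 1 (S X)"
    proof (intro equalityI subsetI)
      fix v assume "v \<in> {mu Y | Y. X \<subset> Y \<and> Y \<subseteq> C \<and> n - q \<le> card Y}"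
      then obtain Y where Y: "v = mu Y" "X \<subset> Y" "Y \<subseteq> C" "n - q \<le> card Y" by auto
      show "v \<in> insert 1 (S X)"
      proof (cases "Y = C")
        case True then show ?thesis using Y by (simp add: mu_def2)
      next
        case False
        then have "card Y < n" using Y cC fC psubset_card_mono by (metis psubsetI)
        then show ?thesis using Y False unfolding S_def by (auto simp: mu_def2)
      qed
    next
      fix v assume v: "v \<in> insert 1 (S X)"
      show "v \<in> {mu Y | Y. X \<subset> Y \<and> Y \<subseteq> C \<and> n - q \<le> card Y}"
      proof (cases "v = 1")
        case True
        then show ?thesis using XC X cC by (intro CollectI exI[of _ C]) (auto simp: mu_def2)
      next
        case False
        then obtain Y where Y: "v = F Y" "X \<subset> Y" "Y \<subseteq> C" "n - q \<le> card Y" "card Y < n"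
          using v unfolding S_def by auto
        then have "Y \<noteq> C" using cC by auto
        then show ?thesis using Y by (intro CollectI exI[of _ Y]) (auto simp: mu_def2)
      qed
    qed
    have "Min (S X) \<le> 1" using Min_in[OF finS neS[OF X]] F01 unfolding S_def by auto
    then have "Min (insert 1 (S X)) = Min (S X)"
      using Min_insert[OF finS neS[OF X]] by simp
    then show "mu X = Min {mu Y | Y. X \<subset> Y \<and> Y \<subseteq> C \<and> n - q \<le> card Y}"
      using eq XC X by (simp add: mu_def2)
  qed
  show ?thesis using cap qm unfolding mu_def F_def by simp
qed

end
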